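(* Let $\mathbb{V}$ and $\mathbb{V}'$ be varieties with signatures $\mathcal{F}\subseteq\mathcal{F}'$ and defining sets of identities $\Sigma\subseteq\Sigma'$ respectively, and suppose $\mathbb{V}$ is BIT speciale with terms $0,\alpha_1,\dots,\alpha_n,\theta$ (so $\mathbb{V}'$ is BIT speciale with the same terms, and every $\mathbb{V}'$-algebra is a $\mathbb{V}$-algebra by forgetting the operations in $\mathcal{F}'\setminus\mathcal{F}$). Let $A'$ be a $\mathbb{V}'$-algebra and $H\subseteq A'$. The following are equivalent: (i) $H$ is an ideal of $A'$ in the variety $\mathbb{V}'$; (ii) $H$ is an ideal of $A'$ in the variety $\mathbb{V}$, and for every $\tau\in\mathcal{F}'\setminus\mathcal{F}$ of arity $k$, all $a_1,\dots,a_k\in A'$, all $1\le i\le n$ and all $h_{rs}\in H$ ($1\le r\le k$, $1\le s\le n$), one has $\alpha_i\big(\tau(\theta(h_{11},\dots,h_{1n},a_1),\dots,\theta(h_{k1},\dots,h_{kn},a_k)),\tau(a_1,\dots,a_k)\big)\in H$; (iii) $H$ is an ideal of $A'$ in the variety $\mathbb{V}$, and for every $\tau\in\mathcal{F}'\setminus\mathcal{F}$ of arity $k$, all $a_1,\dots,a_k\in A'$, all $1\le i\le n$, $1\le j\le k$ and all $h_1,\dots,h_n\in H$, one has $\alpha_i\big(\tau(a_1,\dots,a_{j-1},\theta(h_1,\dots,h_n,a_j),a_{j+1},\dots,a_k),\tau(a_1,\dots,a_k)\big)\in H$.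
   Context: BIT speciale: the algebraic theory contains a constant $0$ and, for some $n\ge1$, binary terms $\alpha_1,\dots,\alpha_n$ and an $(n+1)$-ary term $\theta$ such that $\alpha_i(x,x)=0$ and $\theta(\alpha_1(x,y),\dots,\alpha_n(x,y),y)=x$ are identities. For a variety $\mathbb{W}$ with signature $\mathcal{G}$ containing $0$ in its theory: an ideal term of $\mathbb{W}$ in the variables $y_1,\dots,y_p$ is a term $t(x_1,\dots,x_m,y_1,\dots,y_p)$ over $\mathcal{G}$ such that $t(x_1,\dots,x_m,0,\dots,0)=0$ is an identity of $\mathbb{W}$; a non-empty subset $H$ of a $\mathbb{W}$-algebra $A$ is an ideal of $A$ in $\mathbb{W}$ if $t(a_1,\dots,a_m,b_1,\dots,b_p)\in H$ for every ideal term $t$ of $\mathbb{W}$, all $a_r\in A$ and all $b_s\in H$. *)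

theory Defs
  imports Main
begin

datatype 'f trm = Var nat | App 'f "'f trm list"

fun vars :: "'f trm \<Rightarrow> nat set" where
  "vars (Var v) = {v}"
| "vars (App f ts) = (\<Union>t\<in>set ts. vars t)"

fun wf_trm :: "'f set \<Rightarrow> ('f \<Rightarrow> nat) \<Rightarrow> 'f trm \<Rightarrow> bool" where
  "wf_trm F ar (Var v) = True"
| "wf_trm F ar (App f ts) = (f \<in> F \<and> length ts = ar f \<and> (\<forall>t\<in>set ts. wf_trm F ar t))"

fun subst :: "(nat \<Rightarrow> 'f trm) \<Rightarrow> 'f trm \<Rightarrow> 'f trm" where
  "subst \<sigma> (Var v) = \<sigma> v"
| "subst \<sigma> (App f ts) = App f (map (subst \<sigma>) ts)"

fun eval :: "('f \<Rightarrow> 'a list \<Rightarrow> 'a) \<Rightarrow> 'f trm \<Rightarrow> (nat \<Rightarrow> 'a) \<Rightarrow> 'a" where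
  "eval I (Var v) e = e v"
| "eval I (App f ts) e = I f (map (\<lambda>t. eval I t e) ts)"

definition idents_over :: "'f set \<Rightarrow> ('f \<Rightarrow> nat) \<Rightarrow> ('f trm \<times> 'f trm) set \<Rightarrow> bool" where
  "idents_over F ar \<Sigma> \<longleftrightarrow> (\<forall>(s,t)\<in>\<Sigma>. wf_trm F ar s \<and> wf_trm F ar t)"

section \<open>Equational theory of the variety with signature F and defining identities \<Sigma>
  (equational logic; by Birkhoff's completeness theorem these are exactly the identities of the variety)\<close>

inductive derivable :: "'f set \<Rightarrow> ('f \<Rightarrow> nat) \<Rightarrow> ('f trm \<times> 'f trm) set \<Rightarrow> 'f trm \<Rightarrow> 'f trm \<Rightarrow> bool"
  for F ar \<Sigma> where
  refl: "wf_trm F ar t \<Longrightarrow> derivable F ar \<Sigma> t t"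
| sym: "derivable F ar \<Sigma> s t \<Longrightarrow> derivable F ar \<Sigma> t s"
| trans: "derivable F ar \<Sigma> s t \<Longrightarrow> derivable F ar \<Sigma> t u \<Longrightarrow> derivable F ar \<Sigma> s u"
| ax: "(s, t) \<in> \<Sigma> \<Longrightarrow> (\<forall>v. wf_trm F ar (\<sigma> v)) \<Longrightarrow>
        derivable F ar \<Sigma> (subst \<sigma> s) (subst \<sigma> t)"
| cong: "f \<in> F \<Longrightarrow> length ss = ar f \<Longrightarrow> length ts = ar f \<Longrightarrow>
        (\<forall>i < ar f. derivable F ar \<Sigma> (ss ! i) (ts ! i)) \<Longrightarrow>
        derivable F ar \<Sigma> (App f ss) (App f ts)"

definition is_algebra :: "'f set \<Rightarrow> ('f \<Rightarrow> nat) \<Rightarrow> ('f trm \<times> 'f trm) set \<Rightarrow> 'a set \<Rightarrow> ('f \<Rightarrow> 'a list \<Rightarrow> 'a) \<Rightarrow> bool" where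
  "is_algebra F ar \<Sigma> A I \<longleftrightarrow>
     (\<forall>f\<in>F. \<forall>xs. length xs = ar f \<longrightarrow> set xs \<subseteq> A \<longrightarrow> I f xs \<in> A) \<and>
     (\<forall>(s,t)\<in>\<Sigma>. \<forall>e. (\<forall>v. e v \<in> A) \<longrightarrow> eval I s e = eval I t e)"

text \<open>Variables: x = Var 0, y = Var 1 for the binary terms alpha_i;
  theta has variables 0..n-1 (the first n arguments) and n (the last argument).\<close>

definition bit_speciale :: "'f set \<Rightarrow> ('f \<Rightarrow> nat) \<Rightarrow> ('f trm \<times> 'f trm) set \<Rightarrow>
    'f trm \<Rightarrow> 'f trm list \<Rightarrow> 'f trm \<Rightarrow> bool" where
  "bit_speciale F ar \<Sigma> zero alpha theta \<longleftrightarrow>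
     (let n = length alpha in
       n \<ge> 1 \<and>
       wf_trm F ar zero \<and> vars zero = {} \<and>
       (\<forall>i<n. wf_trm F ar (alpha ! i) \<and> vars (alpha ! i) \<subseteq> {0, 1}) \<and>
       wf_trm F ar theta \<and> vars theta \<subseteq> {..n} \<and>
       (\<forall>i<n. derivable F ar \<Sigma> (subst (\<lambda>v. Var 0) (alpha ! i)) zero) \<and>
       derivable F ar \<Sigma> (subst (\<lambda>k. if k < n then alpha ! k else Var 1) theta) (Var 0))"

text \<open>An ideal term in the variables Y (the y's; all other variables are the x's).\<close>
definition ideal_term :: "'f set \<Rightarrow> ('f \<Rightarrow> nat) \<Rightarrow> ('f trm \<times> 'f trm) set \<Rightarrow> 'f trm \<Rightarrow> nat set \<Rightarrow> 'f trm \<Rightarrow> bool" where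
  "ideal_term F ar \<Sigma> zero Y t \<longleftrightarrow>
     wf_trm F ar t \<and> derivable F ar \<Sigma> (subst (\<lambda>v. if v \<in> Y then zero else Var v) t) zero"

definition is_ideal :: "'f set \<Rightarrow> ('f \<Rightarrow> nat) \<Rightarrow> ('f trm \<times> 'f trm) set \<Rightarrow> 'f trm \<Rightarrow>
    'a set \<Rightarrow> ('f \<Rightarrow> 'a list \<Rightarrow> 'a) \<Rightarrow> 'a set \<Rightarrow> bool" where
  "is_ideal F ar \<Sigma> zero A I H \<longleftrightarrow>
     H \<noteq> {} \<and> H \<subseteq> A \<and>
     (\<forall>Y t. ideal_term F ar \<Sigma> zero Y t \<longrightarrow>
        (\<forall>e. (\<forall>v. e v \<in> A) \<longrightarrow> (\<forall>v\<in>Y. e v \<in> H) \<longrightarrow> eval I t e \<in> H))"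

definition bin_val :: "('f \<Rightarrow> 'a list \<Rightarrow> 'a) \<Rightarrow> 'f trm \<Rightarrow> 'a \<Rightarrow> 'a \<Rightarrow> 'a" where
  "bin_val I t u v = eval I t (\<lambda>k. if k = 0 then u else v)"

definition theta_val :: "('f \<Rightarrow> 'a list \<Rightarrow> 'a) \<Rightarrow> 'f trm \<Rightarrow> nat \<Rightarrow> (nat \<Rightarrow> 'a) \<Rightarrow> 'a \<Rightarrow> 'a" where
  "theta_val I t n h a = eval I t (\<lambda>k. if k < n then h k else a)"

end

theory Submission
  imports Defs
begin


lemma subst_subst: "subst \<sigma> (subst \<tau> t) = subst (\<lambda>v. subst \<sigma> (\<tau> v)) t"
  by (induction t) auto

lemma eval_subst: "eval I (subst \<sigma> t) e = eval I t (\<lambda>v. eval I (\<sigma> v) e)"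
  by (induction t) (auto simp: comp_def cong: map_cong)

lemma eval_cong: "(\<forall>v\<in>vars t. e v = e' v) \<Longrightarrow> eval I t e = eval I t e'"
  by (induction t) (auto cong: map_cong)

lemma subst_cong: "(\<forall>v\<in>vars t. \<sigma> v = \<sigma>' v) \<Longrightarrow> subst \<sigma> t = subst \<sigma>' t"
  by (induction t) auto

lemma subst_Var: "subst Var t = t"
  by (induction t) (auto simp: map_idI)

lemma closed_subst: "vars t = {} \<Longrightarrow> subst \<sigma> t = t"
  using subst_cong[of t \<sigma> Var] subst_Var by auto

lemma wf_subst: "wf_trm G ar t \<Longrightarrow> (\<forall>v. wf_trm G ar (\<sigma> v)) \<Longrightarrow> wf_trm G ar (subst \<sigma> t)"
  by (induction t) auto

lemma wf_mono: "wf_trm F ar t \<Longrightarrow> F \<subseteq> F' \<Longrightarrow> wf_trm F' ar t"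
  by (induction t) auto

lemma derivable_wf:
  assumes "derivable G ar \<Gamma> s t" "idents_over G ar \<Gamma>"
  shows "wf_trm G ar s \<and> wf_trm G ar t"
  using assms
proof (induction rule: derivable.induct)
  case (ax s t \<sigma>)
  then show ?case unfolding idents_over_def by (auto intro!: wf_subst)
next
  case (cong f ss ts)
  then show ?case by (auto simp: in_set_conv_nth)
qed auto

lemma derivable_mono:
  assumes "derivable F ar \<Sigma> s t" "F \<subseteq> F'" "\<Sigma> \<subseteq> \<Sigma>'"
  shows "derivable F' ar \<Sigma>' s t"
  using assms
proof (induction rule: derivable.induct)
  case (refl t) then show ?case by (auto intro: derivable.refl wf_mono)
next
  case (sym s t) then show ?case by (auto intro: derivable.sym)
next
  case (trans s t u) then show ?case by (auto intro: derivable.trans)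
next
  case (ax s t \<sigma>)
  then have "(s, t) \<in> \<Sigma>'" "\<forall>v. wf_trm F' ar (\<sigma> v)" using wf_mono by blast+
  then show ?case by (rule derivable.ax)
next
  case (cong f ss ts) then show ?case by (auto intro!: derivable.cong)
qed

lemma derivable_subst:
  assumes "derivable G ar \<Gamma> s t" "\<forall>v. wf_trm G ar (\<sigma> v)"
  shows "derivable G ar \<Gamma> (subst \<sigma> s) (subst \<sigma> t)"
  using assms
proof (induction rule: derivable.induct)
  case (refl t) then show ?case by (auto intro: derivable.refl wf_subst)
next
  case (sym s t) then show ?case by (auto intro: derivable.sym)
next
  case (trans s t u) then show ?case by (auto intro: derivable.trans)
next
  case (ax s t \<tau>)
  have "derivable G ar \<Gamma> (subst (\<lambda>v. subst \<sigma> (\<tau> v)) s) (subst (\<lambda>v. subst \<sigma> (\<tau> v)) t)"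
    using ax by (intro derivable.ax) (auto intro: wf_subst)
  then show ?case by (simp add: subst_subst)
next
  case (cong f ss ts) then show ?case by (auto intro!: derivable.cong)
qed

lemma derivable_ctx:
  assumes "wf_trm G ar u" "\<forall>v\<in>vars u. derivable G ar \<Gamma> (\<sigma> v) (\<sigma>' v)"
  shows "derivable G ar \<Gamma> (subst \<sigma> u) (subst \<sigma>' u)"
  using assms
proof (induction u)
  case (Var x) then show ?case by simp
next
  case (App f ts)
  show ?case using App by (auto intro!: derivable.cong)
qed

lemma eval_closed:
  assumes "is_algebra G ar \<Gamma> A I" "wf_trm G ar t" "\<forall>v. e v \<in> A"
  shows "eval I t e \<in> A"
  using assms(2)
proof (induction t)
  case (Var x) then show ?case using assms(3) by simp
next
  case (App f ts)
  then have "set (map (\<lambda>t. eval I t e) ts) \<subseteq> A" "length (map (\<lambda>t. eval I t e) ts) = ar f" "f \<in> G" by auto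
  then show ?case using assms(1) unfolding is_algebra_def by auto
qed

lemma sound:
  assumes alg: "is_algebra G ar \<Gamma> A I" and ido: "idents_over G ar \<Gamma>"
    and d: "derivable G ar \<Gamma> s t" and e: "\<forall>v. e v \<in> A"
  shows "eval I s e = eval I t e"
  using d e
proof (induction arbitrary: e rule: derivable.induct)
  case (ax s t \<sigma>)
  have "\<forall>v. eval I (\<sigma> v) e \<in> A" using ax eval_closed[OF alg] by blast
  then have "eval I s (\<lambda>v. eval I (\<sigma> v) e) = eval I t (\<lambda>v. eval I (\<sigma> v) e)"
    using alg ax(1) unfolding is_algebra_def by fastforce
  then show ?case by (simp add: eval_subst)
next
  case (cong f ss ts)
  have "map (\<lambda>t. eval I t e) ss = map (\<lambda>t. eval I t e) ts"
    using cong by (intro nth_equalityI) auto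
  then show ?case by simp
qed auto




lemma bit_mono:
  assumes "bit_speciale F ar \<Sigma> zero alpha theta" "F \<subseteq> F'" "\<Sigma> \<subseteq> \<Sigma>'"
  shows "bit_speciale F' ar \<Sigma>' zero alpha theta"
  using assms unfolding bit_speciale_def Let_def
  by (auto intro: wf_mono derivable_mono)

definition stepT :: "'f \<Rightarrow> nat \<Rightarrow> nat \<Rightarrow> nat \<Rightarrow> 'f trm \<Rightarrow> 'f trm \<Rightarrow> 'f trm" where
  "stepT f k n j theta ai = subst (\<lambda>v. if v = 0 then
      App f (map (\<lambda>r. if r = j then subst (\<lambda>q. if q < n then Var q else Var (n + j)) theta else Var (n + r)) [0..<k])
     else App f (map (\<lambda>r. Var (n + r)) [0..<k])) ai"

definition transT :: "nat \<Rightarrow> 'f trm \<Rightarrow> 'f trm \<Rightarrow> 'f trm" where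
  "transT n theta ai = subst (\<lambda>v. if v = 0 then
      subst (\<lambda>k. if k < n then Var k else subst (\<lambda>k. if k < n then Var (n + k) else Var (2*n)) theta) theta
     else Var (2*n)) ai"

locale bitctx =
  fixes G :: "'f set" and ar :: "'f \<Rightarrow> nat" and \<Gamma> :: "('f trm \<times> 'f trm) set"
    and zero theta :: "'f trm" and alpha :: "'f trm list"
  assumes ido: "idents_over G ar \<Gamma>" and bit: "bit_speciale G ar \<Gamma> zero alpha theta"
begin

lemma n_pos: "length alpha \<ge> 1" and wf_zero: "wf_trm G ar zero" and vars_zero: "vars zero = {}"
  and wf_alpha: "i < length alpha \<Longrightarrow> wf_trm G ar (alpha ! i)"
  and vars_alpha: "i < length alpha \<Longrightarrow> vars (alpha ! i) \<subseteq> {0,1}"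
  and wf_theta: "wf_trm G ar theta" and vars_theta: "vars theta \<subseteq> {..length alpha}"
  and der_a: "i < length alpha \<Longrightarrow> derivable G ar \<Gamma> (subst (\<lambda>v. Var 0) (alpha ! i)) zero"
  and der_t: "derivable G ar \<Gamma> (subst (\<lambda>k. if k < length alpha then alpha ! k else Var 1) theta) (Var 0)"
  using bit unfolding bit_speciale_def Let_def by auto

lemma dwf: "derivable G ar \<Gamma> s t \<Longrightarrow> wf_trm G ar s \<and> wf_trm G ar t"
  using derivable_wf ido by blast

lemma L_alpha0:
  assumes "i < length alpha" "wf_trm G ar w"
  shows "derivable G ar \<Gamma> (subst (\<lambda>_. w) (alpha ! i)) zero"
proof -
  have "derivable G ar \<Gamma> (subst (\<lambda>_. w) (subst (\<lambda>v. Var 0) (alpha ! i))) (subst (\<lambda>_. w) zero)"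
    using der_a[OF assms(1)] assms(2) by (intro derivable_subst) auto
  then show ?thesis by (simp add: subst_subst closed_subst[OF vars_zero])
qed

lemma L_alpha:
  assumes "i < length alpha" "derivable G ar \<Gamma> u w" "derivable G ar \<Gamma> u' w"
  shows "derivable G ar \<Gamma> (subst (\<lambda>k. if k = 0 then u else u') (alpha ! i)) zero"
proof -
  have "derivable G ar \<Gamma> (subst (\<lambda>k. if k = 0 then u else u') (alpha ! i)) (subst (\<lambda>_. w) (alpha ! i))"
    using assms wf_alpha by (intro derivable_ctx) auto
  moreover have "derivable G ar \<Gamma> (subst (\<lambda>_. w) (alpha ! i)) zero"
    using L_alpha0 assms dwf by blast
  ultimately show ?thesis by (rule derivable.trans)
qed

lemma L_theta:
  assumes "derivable G ar \<Gamma> u w"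
  shows "derivable G ar \<Gamma> (subst (\<lambda>k. if k < length alpha then zero else u) theta) w"
proof -
  have w: "wf_trm G ar w" using dwf assms by blast
  have 1: "derivable G ar \<Gamma> (subst (\<lambda>k. if k < length alpha then zero else u) theta)
       (subst (\<lambda>k. if k < length alpha then zero else w) theta)"
    using assms wf_theta wf_zero by (intro derivable_ctx) (auto intro: derivable.refl)
  have 2: "derivable G ar \<Gamma> (subst (\<lambda>k. if k < length alpha then zero else w) theta)
       (subst (\<lambda>k. if k < length alpha then subst (\<lambda>_. w) (alpha ! k) else w) theta)"
    using wf_theta w by (intro derivable_ctx) (auto intro: derivable.refl derivable.sym L_alpha0)
  have 3: "derivable G ar \<Gamma> (subst (\<lambda>_. w) (subst (\<lambda>k. if k < length alpha then alpha ! k else Var 1) theta)) (subst (\<lambda>_. w) (Var 0))"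
    using der_t w by (intro derivable_subst) auto
  have e: "(\<lambda>v. subst (\<lambda>_. w) (if v < length alpha then alpha ! v else Var 1))
     = (\<lambda>k. if k < length alpha then subst (\<lambda>_. w) (alpha ! k) else w)"
    by auto
  from 3 have "derivable G ar \<Gamma> (subst (\<lambda>k. if k < length alpha then subst (\<lambda>_. w) (alpha ! k) else w) theta) w"
    by (simp only: subst_subst e) simp
  then show ?thesis using 1 2 by (blast intro: derivable.trans)
qed

lemma stepT_ideal:
  assumes f: "f \<in> G" and i: "i < length alpha" and j: "j < ar f"
  shows "ideal_term G ar \<Gamma> zero {..<length alpha} (stepT f (ar f) (length alpha) j theta (alpha ! i))"
proof -
  let ?n = "length alpha"
  let ?U = "App f (map (\<lambda>r. if r = j then subst (\<lambda>k. if k < ?n then zero else Var (?n + j)) theta else Var (?n + r)) [0..<ar f])"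
  let ?U' = "App f (map (\<lambda>r. Var (?n + r)) [0..<ar f])"
  let ?Z = "\<lambda>v. if v \<in> {..<?n} then zero else Var v"
  have wfU': "wf_trm G ar ?U'" using f by auto
  have wf: "wf_trm G ar (stepT f (ar f) ?n j theta (alpha ! i))"
    unfolding stepT_def using f wf_theta wf_alpha[OF i]
    by (intro wf_subst) (auto intro!: wf_subst)
  have s1: "subst (\<lambda>v. if v < ?n then zero else Var v) (subst (\<lambda>q. if q < ?n then Var q else Var (?n + j)) theta)
        = subst (\<lambda>k. if k < ?n then zero else Var (?n + j)) theta"
    by (simp add: subst_subst) (rule subst_cong, auto)
  have eq: "subst ?Z (stepT f (ar f) ?n j theta (alpha ! i)) = subst (\<lambda>k. if k = 0 then ?U else ?U') (alpha ! i)"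
    unfolding stepT_def subst_subst
    by (rule subst_cong) (auto simp: s1)
  have dU: "derivable G ar \<Gamma> ?U ?U'"
    using f j by (intro derivable.cong) (auto intro!: L_theta derivable.refl)
  have "derivable G ar \<Gamma> (subst (\<lambda>k. if k = 0 then ?U else ?U') (alpha ! i)) zero"
    using i dU wfU' by (intro L_alpha) (auto intro: derivable.refl)
  then show ?thesis unfolding ideal_term_def using wf eq by simp
qed

lemma transT_ideal:
  assumes i: "i < length alpha"
  shows "ideal_term G ar \<Gamma> zero {..<2 * length alpha} (transT (length alpha) theta (alpha ! i))"
proof -
  let ?n = "length alpha"
  let ?Z = "\<lambda>v. if v \<in> {..<2 * ?n} then zero else Var v"
  let ?INN = "subst (\<lambda>k. if k < ?n then zero else Var (2 * ?n)) theta"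
  let ?OUT = "subst (\<lambda>k. if k < ?n then zero else ?INN) theta"
  have wf: "wf_trm G ar (transT ?n theta (alpha ! i))"
    unfolding transT_def using wf_theta wf_alpha[OF i]
    by (intro wf_subst) (auto intro!: wf_subst)
  have s1: "subst (\<lambda>v. if v < 2 * ?n then zero else Var v) (subst (\<lambda>k. if k < ?n then Var (?n + k) else Var (2 * ?n)) theta) = ?INN"
    by (simp add: subst_subst) (rule subst_cong, auto)
  have s2: "subst (\<lambda>v. if v < 2 * ?n then zero else Var v) (subst (\<lambda>k. if k < ?n then Var k else subst (\<lambda>k. if k < ?n then Var (?n + k) else Var (2 * ?n)) theta) theta) = ?OUT"
    by (simp add: subst_subst s1) (rule subst_cong, auto simp: s1)
  have eq: "subst ?Z (transT ?n theta (alpha ! i)) = subst (\<lambda>k. if k = 0 then ?OUT else Var (2 * ?n)) (alpha ! i)"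
    unfolding transT_def subst_subst
    by (rule subst_cong) (auto simp: s2)
  have d1: "derivable G ar \<Gamma> ?INN (Var (2 * ?n))"
    by (rule L_theta) (auto intro: derivable.refl)
  have d2: "derivable G ar \<Gamma> ?OUT (Var (2 * ?n))"
    by (rule L_theta[OF d1])
  have "derivable G ar \<Gamma> (subst (\<lambda>k. if k = 0 then ?OUT else Var (2 * ?n)) (alpha ! i)) zero"
    using i d2 by (intro L_alpha) (auto intro: derivable.refl)
  then show ?thesis unfolding ideal_term_def using wf eq by simp
qed

end



lemma eval_stepT:
  assumes j: "j < k" and eh: "\<forall>v<n. e v = h v" and ea: "\<forall>r<k. e (n + r) = a r"
  shows "eval I (stepT f k n j theta ai) e =
    bin_val I ai (I f (map (\<lambda>r. if r = j then theta_val I theta n h (a j) else a r) [0..<k])) (I f (map a [0..<k]))"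
proof -
  have th: "eval I (subst (\<lambda>q. if q < n then Var q else Var (n + j)) theta) e = theta_val I theta n h (a j)"
    unfolding eval_subst theta_val_def using eh ea j by (intro arg_cong[where f="eval I theta"]) auto
  have "(\<lambda>v. eval I (if v = 0 then
      App f (map (\<lambda>r. if r = j then subst (\<lambda>q. if q < n then Var q else Var (n + j)) theta else Var (n + r)) [0..<k])
     else App f (map (\<lambda>r. Var (n + r)) [0..<k])) e)
    = (\<lambda>v. if v = 0 then I f (map (\<lambda>r. if r = j then theta_val I theta n h (a j) else a r) [0..<k]) else I f (map a [0..<k]))"
  proof (rule ext)
    fix v
    have m1: "map (\<lambda>r. eval I (if r = j then subst (\<lambda>q. if q < n then Var q else Var (n + j)) theta else Var (n + r)) e) [0..<k]
       = map (\<lambda>r. if r = j then theta_val I theta n h (a j) else a r) [0..<k]"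
      using ea th by (intro map_cong) auto
    have m2: "map (\<lambda>r. eval I (Var (n + r)) e) [0..<k] = map a [0..<k]"
      using ea by (intro map_cong) auto
    show "eval I (if v = 0 then
      App f (map (\<lambda>r. if r = j then subst (\<lambda>q. if q < n then Var q else Var (n + j)) theta else Var (n + r)) [0..<k])
     else App f (map (\<lambda>r. Var (n + r)) [0..<k])) e
    = (if v = 0 then I f (map (\<lambda>r. if r = j then theta_val I theta n h (a j) else a r) [0..<k]) else I f (map a [0..<k]))"
      using m1 m2 by (cases "v = 0") (simp_all only: if_True if_False eval.simps map_map comp_def simp_thms)
  qed
  then show ?thesis unfolding stepT_def eval_subst bin_val_def by (rule arg_cong[where f="eval I ai"])
qed

lemma eval_transT:
  assumes e1: "\<forall>v<n. e v = h1 v" and e2: "\<forall>v<n. e (n + v) = h2 v" and ec: "e (2 * n) = c"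
  shows "eval I (transT n theta ai) e = bin_val I ai (theta_val I theta n h1 (theta_val I theta n h2 c)) c"
proof -
  have inn: "eval I (subst (\<lambda>k. if k < n then Var (n + k) else Var (2 * n)) theta) e = theta_val I theta n h2 c"
    unfolding eval_subst theta_val_def using e2 ec by (intro arg_cong[where f="eval I theta"]) auto
  have out: "eval I (subst (\<lambda>k. if k < n then Var k else subst (\<lambda>k. if k < n then Var (n + k) else Var (2 * n)) theta) theta) e
     = theta_val I theta n h1 (theta_val I theta n h2 c)"
    unfolding eval_subst[of _ _ theta] theta_val_def[of _ _ _ h1] using e1
    apply (intro arg_cong[where f="eval I theta"] ext)
    subgoal for v by (cases "v < n") (simp_all add: inn)
    done
  show ?thesis unfolding transT_def bin_val_def eval_subst[of I _ ai]
    apply (intro arg_cong[where f="eval I ai"] ext)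
    subgoal for v by (cases "v = 0") (simp_all add: out ec)
    done
qed




locale setting =
  fixes F F' :: "'f set" and ar :: "'f \<Rightarrow> nat"
    and \<Sigma> \<Sigma>' :: "('f trm \<times> 'f trm) set"
    and zero theta :: "'f trm" and alpha :: "'f trm list"
    and A :: "'a set" and I :: "'f \<Rightarrow> 'a list \<Rightarrow> 'a" and H :: "'a set"
  assumes sig: "F \<subseteq> F'" and ids: "\<Sigma> \<subseteq> \<Sigma>'"
    and wfS: "idents_over F ar \<Sigma>" and wfS': "idents_over F' ar \<Sigma>'"
    and bit: "bit_speciale F ar \<Sigma> zero alpha theta"
    and alg: "is_algebra F' ar \<Sigma>' A I"
    and HA: "H \<subseteq> A"
begin

sublocale bV: bitctx F ar \<Sigma> zero theta alpha
  using wfS bit by unfold_locales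
sublocale bV': bitctx F' ar \<Sigma>' zero theta alpha
  using wfS' bit_mono[OF bit sig ids] by unfold_locales

definition R :: "'a \<Rightarrow> 'a \<Rightarrow> bool" where
  "R a b \<longleftrightarrow> a \<in> A \<and> b \<in> A \<and> (\<forall>i<length alpha. bin_val I (alpha ! i) a b \<in> H)"

definition zv :: 'a where "zv = eval I zero (\<lambda>_. undefined)"

definition multi :: "'f \<Rightarrow> bool" where
  "multi \<tau> \<longleftrightarrow> (\<forall>a h. \<forall>i < length alpha.
             (\<forall>r < ar \<tau>. a r \<in> A) \<longrightarrow>
             (\<forall>r < ar \<tau>. \<forall>s < length alpha. h r s \<in> H) \<longrightarrow>
             bin_val I (alpha ! i)
               (I \<tau> (map (\<lambda>r. theta_val I theta (length alpha) (h r) (a r)) [0..<ar \<tau>]))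
               (I \<tau> (map a [0..<ar \<tau>])) \<in> H)"

definition step :: "'f \<Rightarrow> bool" where
  "step \<tau> \<longleftrightarrow> (\<forall>a h. \<forall>i < length alpha. \<forall>j < ar \<tau>.
             (\<forall>r < ar \<tau>. a r \<in> A) \<longrightarrow>
             (\<forall>s < length alpha. h s \<in> H) \<longrightarrow>
             bin_val I (alpha ! i)
               (I \<tau> (map (\<lambda>r. if r = j then theta_val I theta (length alpha) h (a j) else a r) [0..<ar \<tau>]))
               (I \<tau> (map a [0..<ar \<tau>])) \<in> H)"

lemma zv_eq: "eval I zero e = zv"
  unfolding zv_def by (rule eval_cong) (simp add: bV.vars_zero)

lemma zvA: "x \<in> A \<Longrightarrow> zv \<in> A"
  using eval_closed[OF alg bV'.wf_zero, of "\<lambda>_. x"] zv_eq by simp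

lemma opA: "f \<in> F' \<Longrightarrow> (\<forall>r<ar f. x r \<in> A) \<Longrightarrow> I f (map x [0..<ar f]) \<in> A"
proof -
  assume "f \<in> F'" "\<forall>r<ar f. x r \<in> A"
  moreover then have "set (map x [0..<ar f]) \<subseteq> A" by auto
  ultimately show ?thesis using alg unfolding is_algebra_def by auto
qed

lemma SF1:
  assumes "a \<in> A" "b \<in> A"
  shows "theta_val I theta (length alpha) (\<lambda>s. bin_val I (alpha ! s) a b) b = a"
proof -
  let ?e = "\<lambda>k. if k = 0 then a else b"
  have "eval I (subst (\<lambda>k. if k < length alpha then alpha ! k else Var 1) theta) ?e = eval I (Var 0) ?e"
    using sound[OF alg wfS' bV'.der_t] assms by auto
  moreover have "(\<lambda>v. eval I (if v < length alpha then alpha ! v else Var 1) ?e)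
     = (\<lambda>k. if k < length alpha then bin_val I (alpha ! k) a b else b)"
    by (auto simp: bin_val_def intro!: ext)
  ultimately show ?thesis unfolding theta_val_def eval_subst by simp
qed

lemma SF2:
  assumes "a \<in> A" "i < length alpha"
  shows "bin_val I (alpha ! i) a a = zv"
proof -
  have "eval I (subst (\<lambda>v. Var 0) (alpha ! i)) (\<lambda>_. a) = eval I zero (\<lambda>_. a)"
    using sound[OF alg wfS' bV'.der_a[OF assms(2)]] assms by auto
  then show ?thesis unfolding bin_val_def eval_subst zv_eq by simp
qed

lemma ideal_down:
  assumes "is_ideal F' ar \<Sigma>' zero A I H"
  shows "is_ideal F ar \<Sigma> zero A I H"
  using assms sig ids unfolding is_ideal_def ideal_term_def
  by (meson derivable_mono wf_mono)

lemma step_of_ideal: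
  assumes bc: "bitctx G ar \<Gamma> zero theta alpha" and idl: "is_ideal G ar \<Gamma> zero A I H" and f: "f \<in> G"
  shows "step f"
  unfolding step_def
proof (intro allI impI)
  fix a h i j
  assume i: "i < length alpha" and j: "j < ar f" and aA: "\<forall>r<ar f. a r \<in> A" and hH: "\<forall>s<length alpha. h s \<in> H"
  let ?n = "length alpha"
  define e where "e = (\<lambda>v. if v < ?n then h v else if v - ?n < ar f then a (v - ?n) else a j)"
  have eA: "\<forall>v. e v \<in> A" using aA hH HA j unfolding e_def by auto
  have eH: "\<forall>v\<in>{..<?n}. e v \<in> H" using hH unfolding e_def by auto
  have "eval I (stepT f (ar f) ?n j theta (alpha ! i)) e \<in> H"
    using idl bitctx.stepT_ideal[OF bc f i j] eA eH unfolding is_ideal_def by blast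
  moreover have "eval I (stepT f (ar f) ?n j theta (alpha ! i)) e =
    bin_val I (alpha ! i) (I f (map (\<lambda>r. if r = j then theta_val I theta ?n h (a j) else a r) [0..<ar f])) (I f (map a [0..<ar f]))"
    by (rule eval_stepT) (auto simp: e_def j)
  ultimately show "bin_val I (alpha ! i) (I f (map (\<lambda>r. if r = j then theta_val I theta ?n h (a j) else a r) [0..<ar f])) (I f (map a [0..<ar f])) \<in> H"
    by simp
qed

end

locale vid = setting +
  assumes V: "is_ideal F ar \<Sigma> zero A I H"
begin

lemma IU: "ideal_term F ar \<Sigma> zero Y t \<Longrightarrow> \<forall>v. e v \<in> A \<Longrightarrow> \<forall>v\<in>Y. e v \<in> H \<Longrightarrow> eval I t e \<in> H"
  using V unfolding is_ideal_def by blast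

lemma Hne: "H \<noteq> {}" using V unfolding is_ideal_def by blast

lemma zvH: "zv \<in> H"
proof -
  obtain x where x: "x \<in> H" using Hne by blast
  have "ideal_term F ar \<Sigma> zero {} zero"
    unfolding ideal_term_def using bV.wf_zero
    by (simp add: closed_subst[OF bV.vars_zero] derivable.refl)
  then have "eval I zero (\<lambda>_. x) \<in> H" using IU[of "{}" zero "\<lambda>_. x"] x HA by auto
  then show ?thesis by (simp add: zv_eq)
qed

lemma zvA': "zv \<in> A" using zvH HA by blast

lemma R_refl: "a \<in> A \<Longrightarrow> R a a"
  unfolding R_def using SF2 zvH by auto

lemma closed_ideal:
  assumes "wf_trm F ar t" "derivable F ar \<Sigma> (subst (\<lambda>_. zero) t) zero"
    "\<forall>v\<in>vars t. e v \<in> H" "\<forall>v. e v \<in> A"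
  shows "eval I t e \<in> H"
proof -
  have "subst (\<lambda>v. if v \<in> vars t then zero else Var v) t = subst (\<lambda>_. zero) t"
    by (rule subst_cong) auto
  then have "ideal_term F ar \<Sigma> zero (vars t) t"
    unfolding ideal_term_def using assms by simp
  then show ?thesis using IU assms by blast
qed

lemma theta_H:
  assumes "\<forall>s<length alpha. h s \<in> H"
  shows "theta_val I theta (length alpha) h zv \<in> H"
proof -
  have d: "derivable F ar \<Sigma> (subst (\<lambda>_. zero) theta) zero"
    using bV.L_theta[of zero zero] bV.wf_zero by (simp add: derivable.refl)
  show ?thesis unfolding theta_val_def
    using assms zvH HA bV.vars_theta
    by (intro closed_ideal[OF bV.wf_theta d]) auto
qed

lemma alpha_H:
  assumes "b \<in> H" "i < length alpha"
  shows "bin_val I (alpha ! i) b zv \<in> H"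
proof -
  have d: "derivable F ar \<Sigma> (subst (\<lambda>_. zero) (alpha ! i)) zero"
    using bV.L_alpha[OF assms(2), of zero zero zero] bV.wf_zero by (simp add: derivable.refl)
  show ?thesis unfolding bin_val_def
    using assms zvH HA
    by (intro closed_ideal[OF bV.wf_alpha[OF assms(2)] d]) auto
qed

lemma R_trans:
  assumes ab: "R a b" and bc: "R b c"
  shows "R a c"
proof -
  let ?n = "length alpha"
  have A3: "a \<in> A" "b \<in> A" "c \<in> A" using ab bc unfolding R_def by auto
  define e where "e = (\<lambda>v. if v < ?n then bin_val I (alpha ! v) a b
     else if v < 2 * ?n then bin_val I (alpha ! (v - ?n)) b c else c)"
  have eH': "e v \<in> H" if "v < 2 * ?n" for v
  proof (cases "v < ?n")
    case True then show ?thesis using ab unfolding R_def e_def by simp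
  next
    case False then have "v - ?n < ?n" using that by linarith
    then show ?thesis using bc that False unfolding R_def e_def by simp
  qed
  have eH: "\<forall>v\<in>{..<2 * ?n}. e v \<in> H" using eH' by simp
  have eA: "\<forall>v. e v \<in> A"
  proof
    fix v show "e v \<in> A"
      using eH'[of v] HA A3 by (cases "v < 2 * ?n") (auto simp: e_def)
  qed
  have "bin_val I (alpha ! i) a c \<in> H" if i: "i < ?n" for i
  proof -
    have "eval I (transT ?n theta (alpha ! i)) e \<in> H"
      using IU[OF bV.transT_ideal[OF i] eA eH] .
    moreover have "eval I (transT ?n theta (alpha ! i)) e =
      bin_val I (alpha ! i) (theta_val I theta ?n (\<lambda>s. bin_val I (alpha ! s) a b)
           (theta_val I theta ?n (\<lambda>s. bin_val I (alpha ! s) b c) c)) c"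
      by (rule eval_transT) (auto simp: e_def)
    ultimately show ?thesis using SF1 A3 by simp
  qed
  then show ?thesis unfolding R_def using A3 by auto
qed

lemma chain:
  assumes f: "f \<in> F'" and st: "step f"
  shows "multi f"
  unfolding multi_def
proof (intro allI impI)
  fix a h i
  assume i: "i < length alpha" and aA: "\<forall>r<ar f. a r \<in> A" and hH: "\<forall>r<ar f. \<forall>s<length alpha. h r s \<in> H"
  let ?n = "length alpha"
  define c where "c r = theta_val I theta ?n (h r) (a r)" for r
  have cA: "c r \<in> A" if "r < ar f" for r
    unfolding c_def theta_val_def using that aA hH HA
    by (intro eval_closed[OF alg bV'.wf_theta]) auto
  define m where "m j r = (if r < j then c r else a r)" for j r
  have mA: "\<forall>r<ar f. m j r \<in> A" for j using aA cA unfolding m_def by auto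
  have "j \<le> ar f \<Longrightarrow> R (I f (map (m j) [0..<ar f])) (I f (map a [0..<ar f]))" for j
  proof (induction j)
    case 0
    have e0: "map (m 0) [0..<ar f] = map a [0..<ar f]" unfolding m_def by simp
    show ?case unfolding e0 using R_refl opA[OF f aA] by blast
  next
    case (Suc j)
    then have j: "j < ar f" by simp
    have "bin_val I (alpha ! i') (I f (map (\<lambda>r. if r = j then theta_val I theta ?n (h j) (m j j) else m j r) [0..<ar f]))
         (I f (map (m j) [0..<ar f])) \<in> H" if "i' < ?n" for i'
      using st j that mA hH unfolding step_def by blast
    moreover have "map (\<lambda>r. if r = j then theta_val I theta ?n (h j) (m j j) else m j r) [0..<ar f] = map (m (Suc j)) [0..<ar f]"
      unfolding m_def c_def by (intro map_cong) auto
    ultimately have "R (I f (map (m (Suc j)) [0..<ar f])) (I f (map (m j) [0..<ar f]))"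
      unfolding R_def using opA[OF f mA] by auto
    then show ?case using Suc R_trans by simp
  qed
  from this[of "ar f"] have "R (I f (map (m (ar f)) [0..<ar f])) (I f (map a [0..<ar f]))" by simp
  moreover have "map (m (ar f)) [0..<ar f] = map c [0..<ar f]" unfolding m_def by simp
  ultimately show "bin_val I (alpha ! i) (I f (map (\<lambda>r. theta_val I theta ?n (h r) (a r)) [0..<ar f])) (I f (map a [0..<ar f])) \<in> H"
    unfolding R_def c_def using i by simp
qed

lemma multi_step:
  assumes mu: "multi f"
  shows "step f"
  unfolding step_def
proof (intro allI impI)
  fix a h i j
  assume i: "i < length alpha" and j: "j < ar f" and aA: "\<forall>r<ar f. a r \<in> A" and hH: "\<forall>s<length alpha. h s \<in> H"
  let ?n = "length alpha"
  define hh where "hh r = (if r = j then h else (\<lambda>s. bin_val I (alpha ! s) (a r) (a r)))" for r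
  have hhH: "\<forall>r<ar f. \<forall>s<?n. hh r s \<in> H"
    unfolding hh_def using hH aA R_refl unfolding R_def by auto
  have meq: "map (\<lambda>r. theta_val I theta ?n (hh r) (a r)) [0..<ar f] = map (\<lambda>r. if r = j then theta_val I theta ?n h (a j) else a r) [0..<ar f]"
    unfolding hh_def using SF1 aA by (intro map_cong) auto
  have "bin_val I (alpha ! i) (I f (map (\<lambda>r. theta_val I theta ?n (hh r) (a r)) [0..<ar f])) (I f (map a [0..<ar f])) \<in> H"
    using mu i aA hhH unfolding multi_def by blast
  then show "bin_val I (alpha ! i) (I f (map (\<lambda>r. if r = j then theta_val I theta ?n h (a j) else a r) [0..<ar f])) (I f (map a [0..<ar f])) \<in> H"
    by (simp only: meq)
qed

lemma compat:
  assumes mu: "\<forall>f\<in>F'. multi f" and wt: "wf_trm F' ar t" and ee: "\<forall>v. R (e v) (e' v)"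
  shows "R (eval I t e) (eval I t e')"
  using wt
proof (induction t)
  case (Var x) then show ?case using ee by simp
next
  case (App f ts)
  let ?n = "length alpha"
  have f: "f \<in> F'" and len: "length ts = ar f" and wts: "\<forall>t\<in>set ts. wf_trm F' ar t" using App.prems by auto
  define a where "a r = eval I (ts ! r) e'" for r
  define c where "c r = eval I (ts ! r) e" for r
  have Rr: "R (c r) (a r)" if "r < ar f" for r
    unfolding a_def c_def using App.IH wts that len by (simp add: nth_mem)
  define hh where "hh r s = bin_val I (alpha ! s) (c r) (a r)" for r s
  have aA: "\<forall>r<ar f. a r \<in> A" and cA: "\<forall>r<ar f. c r \<in> A" using Rr unfolding R_def by auto
  have hhH: "\<forall>r<ar f. \<forall>s<?n. hh r s \<in> H" using Rr unfolding R_def hh_def by auto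
  have ceq: "map (\<lambda>r. theta_val I theta ?n (hh r) (a r)) [0..<ar f] = map c [0..<ar f]"
    unfolding hh_def using SF1 aA cA by (intro map_cong) auto
  have m1: "map (\<lambda>t. eval I t e) ts = map c [0..<ar f]"
    unfolding c_def using len by (intro nth_equalityI) auto
  have m2: "map (\<lambda>t. eval I t e') ts = map a [0..<ar f]"
    unfolding a_def using len by (intro nth_equalityI) auto
  have "bin_val I (alpha ! i) (I f (map c [0..<ar f])) (I f (map a [0..<ar f])) \<in> H" if "i < ?n" for i
  proof -
    have "multi f" using mu f by blast
    then have "bin_val I (alpha ! i) (I f (map (\<lambda>r. theta_val I theta ?n (hh r) (a r)) [0..<ar f])) (I f (map a [0..<ar f])) \<in> H"
      using that aA hhH unfolding multi_def by blast
    then show ?thesis by (simp only: ceq)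
  qed
  then show ?case unfolding R_def using opA[OF f aA] opA[OF f cA] m1 m2 by simp
qed

lemma ideal_up:
  assumes mu: "\<forall>f\<in>F'. multi f"
  shows "is_ideal F' ar \<Sigma>' zero A I H"
  unfolding is_ideal_def
proof (intro conjI allI impI)
  show "H \<noteq> {}" by (rule Hne)
  show "H \<subseteq> A" by (rule HA)
  fix Y t e
  assume it: "ideal_term F' ar \<Sigma>' zero Y t" and eA: "\<forall>v. e v \<in> A" and eH: "\<forall>v\<in>Y. e v \<in> H"
  define e' where "e' v = (if v \<in> Y then zv else e v)" for v
  have ee: "\<forall>v. R (e v) (e' v)"
    unfolding e'_def using R_refl eA eH alpha_H zvA' by (auto simp: R_def)
  have wt: "wf_trm F' ar t" using it unfolding ideal_term_def by simp
  have Rt: "R (eval I t e) (eval I t e')" by (rule compat[OF mu wt ee])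
  have "eval I t e' = eval I (subst (\<lambda>v. if v \<in> Y then zero else Var v) t) e"
    unfolding eval_subst e'_def by (intro arg_cong[where f="eval I t"] ext) (simp add: zv_eq)
  also have "\<dots> = eval I zero e"
    using it eA unfolding ideal_term_def by (intro sound[OF alg wfS']) auto
  also have "\<dots> = zv" by (rule zv_eq)
  finally have "R (eval I t e) zv" using Rt by simp
  then have "theta_val I theta (length alpha) (\<lambda>s. bin_val I (alpha ! s) (eval I t e) zv) zv \<in> H"
    unfolding R_def by (intro theta_H) auto
  then show "eval I t e \<in> H" using SF1 \<open>R (eval I t e) zv\<close> unfolding R_def by simp
qed

end

context setting begin

lemma main:
  "(is_ideal F' ar \<Sigma>' zero A I H \<longleftrightarrow> is_ideal F ar \<Sigma> zero A I H \<and> (\<forall>\<tau>\<in>F' - F. multi \<tau>))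
   \<and> (is_ideal F' ar \<Sigma>' zero A I H \<longleftrightarrow> is_ideal F ar \<Sigma> zero A I H \<and> (\<forall>\<tau>\<in>F' - F. step \<tau>))"
proof -
  have bF: "bitctx F ar \<Sigma> zero theta alpha" and bF': "bitctx F' ar \<Sigma>' zero theta alpha"
    by unfold_locales
  have i_iii: "\<forall>\<tau>\<in>F'. step \<tau>" if "is_ideal F' ar \<Sigma>' zero A I H"
    using step_of_ideal[OF bF' that] by blast
  have iii_i: "is_ideal F' ar \<Sigma>' zero A I H" if V: "is_ideal F ar \<Sigma> zero A I H" and st: "\<forall>\<tau>\<in>F' - F. step \<tau>"
  proof -
    interpret vid F F' ar \<Sigma> \<Sigma>' zero theta alpha A I H using V by unfold_locales
    have "\<forall>\<tau>\<in>F'. step \<tau>" using st step_of_ideal[OF bF V] by blast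
    then have "\<forall>\<tau>\<in>F'. multi \<tau>" using chain by blast
    then show ?thesis by (rule ideal_up)
  qed
  have ii_iii: "\<forall>\<tau>\<in>F' - F. step \<tau>" if V: "is_ideal F ar \<Sigma> zero A I H" and mu: "\<forall>\<tau>\<in>F' - F. multi \<tau>"
  proof -
    interpret vid F F' ar \<Sigma> \<Sigma>' zero theta alpha A I H using V by unfold_locales
    show ?thesis using mu multi_step by blast
  qed
  have i_ii: "\<forall>\<tau>\<in>F' - F. multi \<tau>" if V': "is_ideal F' ar \<Sigma>' zero A I H"
  proof -
    interpret vid F F' ar \<Sigma> \<Sigma>' zero theta alpha A I H using ideal_down[OF V'] by unfold_locales
    show ?thesis using i_iii[OF V'] chain by blast
  qed
  show ?thesis using i_iii iii_i ii_iii i_ii ideal_down by blast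
qed

end


theorem corollary2p7:
  fixes F F' :: "'f set" and ar :: "'f \<Rightarrow> nat"
    and \<Sigma> \<Sigma>' :: "('f trm \<times> 'f trm) set"
    and zero theta :: "'f trm" and alpha :: "'f trm list"
    and A :: "'a set" and I :: "'f \<Rightarrow> 'a list \<Rightarrow> 'a" and H :: "'a set"
  assumes sig: "F \<subseteq> F'" and ids: "\<Sigma> \<subseteq> \<Sigma>'"
    and wfS: "idents_over F ar \<Sigma>" and wfS': "idents_over F' ar \<Sigma>'"
    and bit: "bit_speciale F ar \<Sigma> zero alpha theta"
    and alg: "is_algebra F' ar \<Sigma>' A I"
    and HA: "H \<subseteq> A"
  shows "(is_ideal F' ar \<Sigma>' zero A I H \<longleftrightarrow>
          is_ideal F ar \<Sigma> zero A I H \<and>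
          (\<forall>\<tau>\<in>F' - F. \<forall>a h. \<forall>i < length alpha.
             (\<forall>r < ar \<tau>. a r \<in> A) \<longrightarrow>
             (\<forall>r < ar \<tau>. \<forall>s < length alpha. h r s \<in> H) \<longrightarrow>
             bin_val I (alpha ! i)
               (I \<tau> (map (\<lambda>r. theta_val I theta (length alpha) (h r) (a r)) [0..<ar \<tau>]))
               (I \<tau> (map a [0..<ar \<tau>])) \<in> H))
       \<and> (is_ideal F' ar \<Sigma>' zero A I H \<longleftrightarrow>
          is_ideal F ar \<Sigma> zero A I H \<and>
          (\<forall>\<tau>\<in>F' - F. \<forall>a h. \<forall>i < length alpha. \<forall>j < ar \<tau>.
             (\<forall>r < ar \<tau>. a r \<in> A) \<longrightarrow>
             (\<forall>s < length alpha. h s \<in> H) \<longrightarrow>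
             bin_val I (alpha ! i)
               (I \<tau> (map (\<lambda>r. if r = j then theta_val I theta (length alpha) h (a j) else a r) [0..<ar \<tau>]))
               (I \<tau> (map a [0..<ar \<tau>])) \<in> H))"
proof -
  interpret setting F F' ar \<Sigma> \<Sigma>' zero theta alpha A I H
    using sig ids wfS wfS' bit alg HA by unfold_locales
  show ?thesis using main unfolding multi_def step_def .
qed

end
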